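(* For every $2$-colorable oriented graph $H$ there is a bipartite tournament that forces $H$.
   Context: An oriented graph is a directed graph without loops with at most one edge between any two distinct vertices; it is $2$-colorable if its vertex set can be partitioned into $2$ sets each inducing an acyclic digraph. A bipartite tournament $F=(M\cup N,E)$ is an orientation of a complete bipartite graph with sides $M,N$. A completion of $F$ is any tournament on $V(F)$ agreeing with $F$ on the edges between $M$ and $N$. $F$ forces $H$ if every completion of $F$ contains a (not necessarily induced) copy of $H$. *)

theory Defs
  imports Main
begin

definition oriented_graph :: "'a set \<Rightarrow> ('a \<times> 'a) set \<Rightarrow> bool" where
  "oriented_graph V E \<longleftrightarrow> finite V \<and> E \<subseteq> V \<times> V \<and>
     (\<forall>v. (v, v) \<notin> E) \<and> (\<forall>u v. (u, v) \<in> E \<longrightarrow> (v, u) \<notin> E)"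

definition two_colorable :: "'a set \<Rightarrow> ('a \<times> 'a) set \<Rightarrow> bool" where
  "two_colorable V E \<longleftrightarrow> (\<exists>A B. A \<union> B = V \<and> A \<inter> B = {} \<and>
     acyclic (E \<inter> (A \<times> A)) \<and> acyclic (E \<inter> (B \<times> B)))"

definition tournament :: "'a set \<Rightarrow> ('a \<times> 'a) set \<Rightarrow> bool" where
  "tournament V E \<longleftrightarrow> oriented_graph V E \<and>
     (\<forall>u\<in>V. \<forall>v\<in>V. u \<noteq> v \<longrightarrow> (u, v) \<in> E \<or> (v, u) \<in> E)"

definition bipartite_tournament :: "'a set \<Rightarrow> 'a set \<Rightarrow> ('a \<times> 'a) set \<Rightarrow> bool" where
  "bipartite_tournament M N E \<longleftrightarrow> finite M \<and> finite N \<and> M \<inter> N = {} \<and>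
     E \<subseteq> (M \<times> N) \<union> (N \<times> M) \<and>
     (\<forall>u\<in>M. \<forall>v\<in>N. ((u, v) \<in> E \<longleftrightarrow> (v, u) \<notin> E))"

definition completion :: "'a set \<Rightarrow> 'a set \<Rightarrow> ('a \<times> 'a) set \<Rightarrow> ('a \<times> 'a) set \<Rightarrow> bool" where
  "completion M N E T \<longleftrightarrow> tournament (M \<union> N) T \<and>
     T \<inter> ((M \<times> N) \<union> (N \<times> M)) = E"

text \<open>(V, T) contains a (not necessarily induced) copy of (VH, EH).\<close>
definition contains_copy :: "'b set \<Rightarrow> ('b \<times> 'b) set \<Rightarrow> 'a set \<Rightarrow> ('a \<times> 'a) set \<Rightarrow> bool" where
  "contains_copy V T VH EH \<longleftrightarrow> (\<exists>f. inj_on f VH \<and> f ` VH \<subseteq> V \<and>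
     (\<forall>(u, v)\<in>EH. (f u, f v) \<in> T))"

definition forces :: "'b set \<Rightarrow> 'b set \<Rightarrow> ('b \<times> 'b) set \<Rightarrow> 'a set \<Rightarrow> ('a \<times> 'a) set \<Rightarrow> bool" where
  "forces M N E VH EH \<longleftrightarrow> (\<forall>T. completion M N E T \<longrightarrow> contains_copy (M \<union> N) T VH EH)"

end

theory Submission
  imports Defs
begin


lemma tourn_chain:
  assumes "finite S" "card S \<ge> 2^a" "\<forall>u\<in>S. \<forall>v\<in>S. u \<noteq> v \<longrightarrow> (u,v)\<in>T \<or> (v,u)\<in>T"
  shows "\<exists>xs. distinct xs \<and> set xs \<subseteq> S \<and> length xs = a \<and> sorted_wrt (\<lambda>x y. (x,y)\<in>T) xs"
  using assms
proof (induction a arbitrary: S)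
  case 0
  then show ?case by (intro exI[of _ "[]"]) auto
next
  case (Suc a)
  have "S \<noteq> {}" using Suc.prems by (auto)
  then obtain v where v: "v \<in> S" by blast
  define Out where "Out = {u\<in>S-{v}. (v,u)\<in>T}"
  define In where "In = {u\<in>S-{v}. (u,v)\<in>T}"
  have un: "Out \<union> In = S - {v}" using Suc.prems(3) v unfolding Out_def In_def by blast
  have c1: "card (S - {v}) = card S - 1" using v Suc.prems(1) by simp
  have "card (S - {v}) \<le> card Out + card In" unfolding un[symmetric] by (rule card_Un_le)
  hence "card Out \<ge> 2^a \<or> card In \<ge> 2^a" using c1 Suc.prems(2) by auto
  then show ?case
  proof
    assume "card Out \<ge> 2^a"
    moreover have "finite Out" using Suc.prems(1) unfolding Out_def by simp
    moreover have "\<forall>u\<in>Out. \<forall>w\<in>Out. u \<noteq> w \<longrightarrow> (u,w)\<in>T \<or> (w,u)\<in>T" using Suc.prems(3) unfolding Out_def by blast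
    ultimately obtain xs where xs: "distinct xs" "set xs \<subseteq> Out" "length xs = a" "sorted_wrt (\<lambda>x y. (x,y)\<in>T) xs"
      using Suc.IH by blast
    show ?case using xs v unfolding Out_def by (intro exI[of _ "v # xs"]) auto
  next
    assume "card In \<ge> 2^a"
    moreover have "finite In" using Suc.prems(1) unfolding In_def by simp
    moreover have "\<forall>u\<in>In. \<forall>w\<in>In. u \<noteq> w \<longrightarrow> (u,w)\<in>T \<or> (w,u)\<in>T" using Suc.prems(3) unfolding In_def by blast
    ultimately obtain xs where xs: "distinct xs" "set xs \<subseteq> In" "length xs = a" "sorted_wrt (\<lambda>x y. (x,y)\<in>T) xs"
      using Suc.IH by blast
    show ?case using xs v unfolding In_def by (intro exI[of _ "xs @ [v]"]) (auto simp: sorted_wrt_append)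
  qed
qed

lemma lin_ext:
  assumes "finite S" "acyclic R"
  shows "\<exists>r. inj_on r S \<and> r ` S = {..<card S} \<and> (\<forall>u\<in>S. \<forall>v\<in>S. (u,v)\<in>R \<longrightarrow> r u < r v)"
  using assms
proof (induction "card S" arbitrary: S)
  case 0
  then show ?case by auto
next
  case (Suc k)
  have "S \<noteq> {}" using Suc.hyps(2) by auto
  then obtain x where "x \<in> S" by blast
  have "finite (R \<inter> S \<times> S)" using Suc.prems(1) by (meson finite_SigmaI finite_Int)
  moreover have "acyclic (R \<inter> S \<times> S)" using Suc.prems(2) acyclic_subset by blast
  ultimately have "wf (R \<inter> S \<times> S)" by (rule finite_acyclic_wf)
  then obtain z where z: "z \<in> S" "\<And>y. (y,z) \<in> R \<inter> S \<times> S \<Longrightarrow> y \<notin> S"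
    using wfE_min \<open>x \<in> S\<close> by metis
  have ck: "k = card (S - {z})" using Suc.hyps(2) z(1) Suc.prems(1) by simp
  obtain r where r: "inj_on r (S - {z})" "r ` (S - {z}) = {..<card (S - {z})}"
     "\<forall>u\<in>S - {z}. \<forall>v\<in>S - {z}. (u,v)\<in>R \<longrightarrow> r u < r v"
    using Suc.hyps(1)[OF ck] Suc.prems by auto
  define r' where "r' = (\<lambda>u. if u = z then 0 else Suc (r u))"
  have "inj_on r' S" using r(1) unfolding r'_def inj_on_def by auto
  moreover have "r' ` S = {..<card S}"
  proof -
    have "r' ` S = insert 0 (Suc ` (r ` (S - {z})))" using z(1) unfolding r'_def by auto
    also have "\<dots> = insert 0 (Suc ` {..<k})" using r(2) ck by simp
    also have "\<dots> = {..<Suc k}" by (rule lessThan_Suc_eq_insert_0[symmetric])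
    finally show ?thesis using Suc.hyps(2) by simp
  qed
  moreover have "\<forall>u\<in>S. \<forall>v\<in>S. (u,v)\<in>R \<longrightarrow> r' u < r' v"
  proof (intro ballI impI)
    fix u v assume uv: "u \<in> S" "v \<in> S" "(u,v) \<in> R"
    have "v \<noteq> z" using z(2)[of u] uv by auto
    then show "r' u < r' v" using r(3) uv unfolding r'_def by auto
  qed
  ultimately show ?case by blast
qed

lemma pow_aux: "(d::nat)^n * (d + n) \<le> (d+1)^n * d"
proof (induction n)
  case 0 then show ?case by simp
next
  case (Suc n)
  have "d^(Suc n) * (d + Suc n) \<le> (d+1) * (d^n * (d+n))"
    by (simp add: algebra_simps)
  also have "\<dots> \<le> (d+1) * ((d+1)^n * d)" using Suc.IH by (rule mult_left_mono) simp
  finally show ?case by (simp add: algebra_simps)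
qed

lemma two_pow: "(c::nat) \<ge> 1 \<Longrightarrow> 2 * (c - 1)^c \<le> c^c"
proof (cases c)
  case 0 then show "c \<ge> 1 \<Longrightarrow> ?thesis" by simp
next
  case (Suc d)
  show ?thesis
  proof (cases d)
    case 0 then show ?thesis using Suc by simp
  next
    case (Suc e)
    have h: "d^(d+1) * (d + (d+1)) \<le> (d+1)^(d+1) * d" by (rule pow_aux)
    have "(2 * d^(d+1)) * d \<le> d^(d+1) * (d + (d+1))" by (simp add: algebra_simps)
    hence "(2 * d^(d+1)) * d \<le> (d+1)^(d+1) * d" using h by linarith
    hence "2 * d^(d+1) \<le> (d+1)^(d+1)" using \<open>d = Suc e\<close> mult_le_cancel2 by (metis zero_less_Suc)
    then show ?thesis using \<open>c = Suc d\<close> by simp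
  qed
qed



definition mtch :: "(nat \<Rightarrow> nat \<Rightarrow> bool) \<Rightarrow> nat \<Rightarrow> nat \<Rightarrow> ('b \<times> 'b) set \<Rightarrow> 'b list \<Rightarrow> 'b list \<Rightarrow> bool" where
  "mtch h a b R xs ys \<longleftrightarrow> (\<forall>i<a. \<forall>k<b. ((xs!i, ys!k) \<in> R \<longleftrightarrow> h i k))"

lemma card_split2:
  assumes "A \<inter> B = {}"
  shows "card {R. R \<subseteq> A \<union> B \<and> P (R \<inter> A) \<and> Q (R \<inter> B)} = card {S. S \<subseteq> A \<and> P S} * card {S. S \<subseteq> B \<and> Q S}"
proof -
  have "bij_betw (\<lambda>R. (R \<inter> A, R \<inter> B)) {R. R \<subseteq> A \<union> B \<and> P (R \<inter> A) \<and> Q (R \<inter> B)} ({S. S \<subseteq> A \<and> P S} \<times> {S. S \<subseteq> B \<and> Q S})"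
  proof (rule bij_betw_byWitness[where f'="\<lambda>(S1,S2). S1 \<union> S2"], goal_cases)
    case 1 then show ?case by auto
  next
    case 2 then show ?case using assms by auto
  next
    case 3 then show ?case by auto
  next
    case 4 show ?case
    proof clarify
      fix S1 S2 assume s: "S1 \<subseteq> A" "P S1" "S2 \<subseteq> B" "Q S2"
      have "(S1 \<union> S2) \<inter> A = S1" "(S1 \<union> S2) \<inter> B = S2" using s(1,3) assms by auto
      then show "S1 \<union> S2 \<subseteq> A \<union> B \<and> P ((S1 \<union> S2) \<inter> A) \<and> Q ((S1 \<union> S2) \<inter> B)" using s by auto
    qed
  qed
  then show ?thesis by (simp add: bij_betw_same_card card_cartesian_product)
qed

lemma card_blocks:
  assumes "finite I" "finite U" "\<forall>i\<in>I. D i \<subseteq> U" "\<forall>i\<in>I. \<forall>j\<in>I. i \<noteq> j \<longrightarrow> D i \<inter> D j = {}"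
  shows "card {R. R \<subseteq> U \<and> (\<forall>i\<in>I. P i (R \<inter> D i))} = 2 ^ (card U - card (\<Union>i\<in>I. D i)) * (\<Prod>i\<in>I. card {S. S \<subseteq> D i \<and> P i S})"
  using assms
proof (induction I arbitrary: U rule: finite_induct)
  case empty
  have "{R. R \<subseteq> U} = Pow U" by auto
  then show ?case using empty card_Pow by simp
next
  case (insert i I)
  define U' where "U' = U - D i"
  have DU: "U = D i \<union> U'" using insert.prems(2) unfolding U'_def by auto
  have dis: "D i \<inter> U' = {}" unfolding U'_def by auto
  have DjU: "\<forall>j\<in>I. D j \<subseteq> U'" using insert.prems(2,3) insert.hyps(2) unfolding U'_def by fastforce
  have eq: "{R. R \<subseteq> U \<and> (\<forall>j\<in>insert i I. P j (R \<inter> D j))} =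
     {R. R \<subseteq> D i \<union> U' \<and> P i (R \<inter> D i) \<and> (\<lambda>R'. \<forall>j\<in>I. P j (R' \<inter> D j)) (R \<inter> U')}"
  proof -
    have "\<And>R j. j \<in> I \<Longrightarrow> R \<inter> U' \<inter> D j = R \<inter> D j" using DjU by auto
    then show ?thesis using DU by auto
  qed
  have fU': "finite U'" using insert.prems(1) unfolding U'_def by simp
  have IH: "card {R. R \<subseteq> U' \<and> (\<forall>j\<in>I. P j (R \<inter> D j))} = 2 ^ (card U' - card (\<Union>j\<in>I. D j)) * (\<Prod>j\<in>I. card {S. S \<subseteq> D j \<and> P j S})"
    using insert.IH[OF fU' DjU] insert.prems(3) by blast
  have cs: "card {R. R \<subseteq> U \<and> (\<forall>j\<in>insert i I. P j (R \<inter> D j))} = card {S. S \<subseteq> D i \<and> P i S} * card {R. R \<subseteq> U' \<and> (\<forall>j\<in>I. P j (R \<inter> D j))}"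
    unfolding eq by (rule card_split2[OF dis])
  have fDi: "finite (D i)" using insert.prems(1,2) by (meson insertI1 finite_subset)
  have cU': "card U' = card U - card (D i)" unfolding U'_def using insert.prems(2) fDi
    by (simp add: card_Diff_subset)
  have disU: "D i \<inter> (\<Union>j\<in>I. D j) = {}" using insert.prems(3) insert.hyps(2) by fastforce
  have fUI: "finite (\<Union>j\<in>I. D j)" using insert.hyps(1) insert.prems(1,2) by (meson finite_UN_I finite_subset insertCI)
  have cun: "card (\<Union>j\<in>insert i I. D j) = card (D i) + card (\<Union>j\<in>I. D j)"
    using card_Un_disjoint[OF fDi fUI disU] by simp
  show ?case unfolding cs IH cun cU' using insert.hyps by (simp add: algebra_simps diff_diff_left)
qed

lemma mtch_iff:
  assumes "distinct xs" "length xs = a" "distinct ys" "length ys = b" "S \<subseteq> set xs \<times> set ys"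
  shows "mtch h a b S xs ys \<longleftrightarrow> S = {(xs!i, ys!k) | i k. i<a \<and> k<b \<and> h i k}"
proof
  assume m: "mtch h a b S xs ys"
  show "S = {(xs!i, ys!k) | i k. i<a \<and> k<b \<and> h i k}"
  proof
    show "S \<subseteq> {(xs!i, ys!k) | i k. i<a \<and> k<b \<and> h i k}"
    proof
      fix p assume "p \<in> S"
      then obtain x y where p: "p = (x,y)" "x \<in> set xs" "y \<in> set ys" using assms(5) by auto
      then obtain i k where ik: "i < a" "k < b" "x = xs!i" "y = ys!k" using assms(2,4) by (metis in_set_conv_nth)
      then have "h i k" using m \<open>p \<in> S\<close> p unfolding mtch_def by auto
      then show "p \<in> {(xs!i, ys!k) | i k. i<a \<and> k<b \<and> h i k}" using ik p by auto
    qed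
    show "{(xs!i, ys!k) | i k. i<a \<and> k<b \<and> h i k} \<subseteq> S" using m unfolding mtch_def by auto
  qed
next
  assume S: "S = {(xs!i, ys!k) | i k. i<a \<and> k<b \<and> h i k}"
  show "mtch h a b S xs ys" unfolding mtch_def
  proof (intro allI impI)
    fix i k assume ik: "i < a" "k < b"
    show "((xs!i, ys!k) \<in> S) = h i k"
    proof
      assume "(xs!i, ys!k) \<in> S"
      then obtain i' k' where "i' < a" "k' < b" "h i' k'" "xs!i = xs!i'" "ys!k = ys!k'" using S by auto
      then show "h i k" using ik assms(1-4) nth_eq_iff_index_eq by metis
    qed (use S ik in auto)
  qed
qed

lemma card_nomatch:
  assumes "distinct xs" "length xs = a" "distinct ys" "length ys = b"
  shows "card {S. S \<subseteq> set xs \<times> set ys \<and> \<not> mtch h a b S xs ys} = 2^(a*b) - 1"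
proof -
  define S0 where "S0 = {(xs!i, ys!k) | i k. i<a \<and> k<b \<and> h i k}"
  have "{S. S \<subseteq> set xs \<times> set ys \<and> \<not> mtch h a b S xs ys} = Pow (set xs \<times> set ys) - {S0}"
    using mtch_iff[OF assms] unfolding S0_def by auto
  moreover have "S0 \<in> Pow (set xs \<times> set ys)" unfolding S0_def using assms(2,4) by auto
  moreover have "card (Pow (set xs \<times> set ys)) = 2^(a*b)"
    using assms by (simp add: card_Pow card_cartesian_product distinct_card)
  ultimately show ?thesis by (simp add: card_Diff_singleton)
qed



lemma key_ineq:
  assumes "(c::nat) \<ge> 1"
  shows "2^(X*(c*(X+1))) * (c-1)^((c*(X+1))*(c*(X+1))) < c^((c*(X+1))*(c*(X+1)))"
proof -
  define K where "K = X + 1"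
  define p where "p = c * K"
  have pp: "p * p = c * (K * p)" unfolding p_def by (simp add: algebra_simps)
  have p1: "p \<ge> 1" unfolding p_def K_def using assms by simp
  have "(2*(c-1)^c)^(K*p) \<le> (c^c)^(K*p)" by (rule power_mono[OF two_pow[OF assms]]) simp
  hence le: "2^(K*p) * (c-1)^(p*p) \<le> c^(p*p)"
    unfolding pp by (simp add: power_mult power_mult_distrib)
  have "X * p < K * p" using p1 unfolding K_def by simp
  hence lt: "(2::nat)^(X*p) < 2^(K*p)" by simp
  have "2^(X*p) * (c-1)^(p*p) < c^(p*p)"
  proof (cases "(c-1)^(p*p) = 0")
    case True then show ?thesis using assms by simp
  next
    case False
    then have "2^(X*p) * (c-1)^(p*p) < 2^(K*p) * (c-1)^(p*p)" using lt by simp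
    then show ?thesis using le by linarith
  qed
  then show ?thesis unfolding p_def K_def .
qed

lemma int_dis:
  assumes "(g1::nat) \<noteq> g2"
  shows "{s + g1*G..<s + g1*G+G} \<inter> {s + g2*G..<s + g2*G+G} = {}"
proof -
  have "g1 < g2 \<or> g2 < g1" using assms by auto
  then show ?thesis
  proof
    assume "g1 < g2"
    then have "g1*G + G \<le> g2*G" by (metis add.commute mult_Suc le_simps(3) mult_le_mono1)
    then show ?thesis by auto
  next
    assume "g2 < g1"
    then have "g2*G + G \<le> g1*G" by (metis add.commute mult_Suc le_simps(3) mult_le_mono1)
    then show ?thesis by auto
  qed
qed



lemma CL:
  fixes a b :: nat and h :: "nat \<Rightarrow> nat \<Rightarrow> bool"
  shows "\<exists>(M::nat set) N E. bipartite_tournament M N E \<and> (\<forall>T. completion M N E T \<longrightarrow>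
     (\<exists>xs ys. distinct xs \<and> length xs = a \<and> set xs \<subseteq> M \<and> sorted_wrt (\<lambda>x y. (x,y)\<in>T) xs \<and>
       distinct ys \<and> length ys = b \<and> set ys \<subseteq> N \<and> sorted_wrt (\<lambda>x y. (x,y)\<in>T) ys \<and>
       (\<forall>i<a. \<forall>k<b. (h i k \<longrightarrow> (xs!i, ys!k) \<in> T) \<and> (\<not> h i k \<longrightarrow> (ys!k, xs!i) \<in> T))))"
proof -
  define G where "G = (2::nat)^a"
  define Gb where "Gb = (2::nat)^b"
  define c where "c = (2::nat)^(a*b)"
  define X where "X = a*a + b*b"
  define p where "p = c*(X+1)"
  define m where "m = p*G"
  define n where "n = p*Gb"
  define M where "M = {0..<m}"
  define N where "N = {m..<m+n}"
  define La where "La = {xs. set xs \<subseteq> {0..<G} \<and> length xs = a \<and> distinct xs}"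
  define Lb where "Lb = {xs. set xs \<subseteq> {0..<Gb} \<and> length xs = b \<and> distinct xs}"
  define Fams where "Fams = {XS. set XS \<subseteq> La \<and> length XS = p} \<times> {YS. set YS \<subseteq> Lb \<and> length YS = p}"
  define cM where "cM = (\<lambda>XS g. map (\<lambda>t. g*G + t) (XS!g))"
  define cN where "cN = (\<lambda>YS j. map (\<lambda>t. m + j*Gb + t) (YS!j))"
  define I where "I = {..<p} \<times> {..<p}"
  define D where "D = (\<lambda>F i. set (cM (fst F) (fst i)) \<times> set (cN (snd F) (snd i)))"
  define P where "P = (\<lambda>F i S. \<not> mtch h a b S (cM (fst F) (fst i)) (cN (snd F) (snd i)))"
  define Bad where "Bad = (\<lambda>F. {R. R \<subseteq> M \<times> N \<and> (\<forall>i\<in>I. P F i (R \<inter> D F i))})"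
  have aG: "a \<le> G" unfolding G_def by (simp add: less_imp_le_nat)
  have bG: "b \<le> Gb" unfolding Gb_def by (simp add: less_imp_le_nat)
  have c1: "c \<ge> 1" unfolding c_def by simp
  have finI: "finite I" unfolding I_def by simp
  have cardI: "card I = p * p" unfolding I_def by (simp add: card_cartesian_product)
  have cMp: "set (cM XS g) \<subseteq> {g*G..<g*G+G} \<and> distinct (cM XS g) \<and> length (cM XS g) = a"
    if "set XS \<subseteq> La" "length XS = p" "g < p" for XS g
  proof -
    have "XS!g \<in> La" using that by auto
    then show ?thesis unfolding cM_def La_def by (auto simp: distinct_map inj_on_def)
  qed
  have cNp: "set (cN YS j) \<subseteq> {m + j*Gb..<m + j*Gb+Gb} \<and> distinct (cN YS j) \<and> length (cN YS j) = b"
    if "set YS \<subseteq> Lb" "length YS = p" "j < p" for YS j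
  proof -
    have "YS!j \<in> Lb" using that by auto
    then show ?thesis unfolding cN_def Lb_def by (auto simp: distinct_map inj_on_def)
  qed
  have grpM: "{g*G..<g*G+G} \<subseteq> M" if "g < p" for g
  proof -
    have "g*G+G \<le> p*G" using that by (metis add.commute mult_Suc le_simps(3) mult_le_mono1)
    then show ?thesis unfolding M_def m_def by auto
  qed
  have grpN: "{m + j*Gb..<m + j*Gb+Gb} \<subseteq> N" if "j < p" for j
  proof -
    have "j*Gb+Gb \<le> p*Gb" using that by (metis add.commute mult_Suc le_simps(3) mult_le_mono1)
    then show ?thesis unfolding N_def n_def by auto
  qed
  have finMN: "finite (M \<times> N)" unfolding M_def N_def by simp
  have cardMN: "card (M \<times> N) = m * n" unfolding M_def N_def by (simp add: card_cartesian_product)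
  have cardBad: "card (Bad F) = 2^(m*n - p*p*(a*b)) * (c-1)^(p*p)" if F: "F \<in> Fams" for F
  proof -
    obtain XS YS where F': "F = (XS, YS)" "set XS \<subseteq> La" "length XS = p" "set YS \<subseteq> Lb" "length YS = p"
      using F unfolding Fams_def by auto
    have Dsub: "\<forall>i\<in>I. D F i \<subseteq> M \<times> N"
    proof
      fix i assume "i \<in> I"
      then have "fst i < p" "snd i < p" unfolding I_def by auto
      then have "set (cM XS (fst i)) \<subseteq> M" "set (cN YS (snd i)) \<subseteq> N"
        using cMp[OF F'(2,3)] cNp[OF F'(4,5)] grpM grpN by (meson subset_trans)+
      then show "D F i \<subseteq> M \<times> N" unfolding D_def using F'(1) by auto
    qed
    have Ddis: "\<forall>i\<in>I. \<forall>j\<in>I. i \<noteq> j \<longrightarrow> D F i \<inter> D F j = {}"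
    proof (intro ballI impI)
      fix i j assume ij: "i \<in> I" "j \<in> I" "i \<noteq> j"
      obtain g1 j1 where i: "i = (g1, j1)" "g1 < p" "j1 < p" using ij(1) unfolding I_def by auto
      obtain g2 j2 where j: "j = (g2, j2)" "g2 < p" "j2 < p" using ij(2) unfolding I_def by auto
      have s1: "set (cM XS g1) \<subseteq> {g1*G..<g1*G+G}" "set (cM XS g2) \<subseteq> {g2*G..<g2*G+G}"
        using cMp[OF F'(2,3)] i j by auto
      have s2: "set (cN YS j1) \<subseteq> {m + j1*Gb..<m + j1*Gb+Gb}" "set (cN YS j2) \<subseteq> {m + j2*Gb..<m + j2*Gb+Gb}"
        using cNp[OF F'(4,5)] i j by auto
      have dM: "{g1*G..<g1*G+G} \<inter> {g2*G..<g2*G+G} = {}" if "g1 \<noteq> g2"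
        using int_dis[OF that, of 0 G] by simp
      have dN: "{m + j1*Gb..<m + j1*Gb+Gb} \<inter> {m + j2*Gb..<m + j2*Gb+Gb} = {}" if "j1 \<noteq> j2"
        using int_dis[OF that, of m Gb] by simp
      have "g1 \<noteq> g2 \<or> j1 \<noteq> j2" using ij(3) i j by auto
      then show "D F i \<inter> D F j = {}"
      proof
        assume "g1 \<noteq> g2"
        then have "set (cM XS g1) \<inter> set (cM XS g2) = {}" using dM s1 by blast
        then show ?thesis unfolding D_def using i j F'(1) by auto
      next
        assume "j1 \<noteq> j2"
        then have "set (cN YS j1) \<inter> set (cN YS j2) = {}" using dN s2 by blast
        then show ?thesis unfolding D_def using i j F'(1) by auto
      qed
    qed
    have cD: "card (D F i) = a * b" if "i \<in> I" for i
    proof -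
      have "fst i < p" "snd i < p" using that unfolding I_def by auto
      then show ?thesis unfolding D_def using cMp[OF F'(2,3)] cNp[OF F'(4,5)] F'(1)
        by (simp add: card_cartesian_product distinct_card)
    qed
    have finD: "finite (D F i)" for i unfolding D_def by simp
    have cU: "card (\<Union>i\<in>I. D F i) = p * p * (a * b)"
      using card_UN_disjoint[OF finI, of "D F"] finD Ddis cD cardI by simp
    have cP: "card {S. S \<subseteq> D F i \<and> P F i S} = c - 1" if "i \<in> I" for i
    proof -
      have "fst i < p" "snd i < p" using that unfolding I_def by auto
      then have "distinct (cM XS (fst i))" "length (cM XS (fst i)) = a"
          "distinct (cN YS (snd i))" "length (cN YS (snd i)) = b"
        using cMp[OF F'(2,3)] cNp[OF F'(4,5)] by auto
      from card_nomatch[OF this, of h] show ?thesis unfolding D_def P_def c_def using F'(1) by simp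
    qed
    have "card (Bad F) = 2 ^ (card (M \<times> N) - card (\<Union>i\<in>I. D F i)) * (\<Prod>i\<in>I. card {S. S \<subseteq> D F i \<and> P F i S})"
      unfolding Bad_def by (rule card_blocks[OF finI finMN Dsub Ddis])
    also have "\<dots> = 2^(m*n - p*p*(a*b)) * (c-1)^(p*p)"
      using cP cU cardMN cardI by simp
    finally show ?thesis .
  qed
  have finLa: "finite La" unfolding La_def
    by (rule finite_subset[OF _ finite_lists_length_eq[of "{0..<G}" a]]) auto
  have finLb: "finite Lb" unfolding Lb_def
    by (rule finite_subset[OF _ finite_lists_length_eq[of "{0..<Gb}" b]]) auto
  have cLa: "card La \<le> 2^(a*a)"
  proof -
    have "card La \<le> card {xs. set xs \<subseteq> {0..<G} \<and> length xs = a}" unfolding La_def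
      by (rule card_mono[OF finite_lists_length_eq]) auto
    also have "\<dots> = G^a" by (simp add: card_lists_length_eq)
    finally show ?thesis unfolding G_def by (simp add: power_mult)
  qed
  have cLb: "card Lb \<le> 2^(b*b)"
  proof -
    have "card Lb \<le> card {xs. set xs \<subseteq> {0..<Gb} \<and> length xs = b}" unfolding Lb_def
      by (rule card_mono[OF finite_lists_length_eq]) auto
    also have "\<dots> = Gb^b" by (simp add: card_lists_length_eq)
    finally show ?thesis unfolding Gb_def by (simp add: power_mult)
  qed
  have finFams: "finite Fams" unfolding Fams_def using finLa finLb
    by (simp add: finite_lists_length_eq)
  have cardFams: "card Fams \<le> 2^(X*p)"
  proof -
    have "card Fams = card La ^ p * card Lb ^ p" unfolding Fams_def
      using finLa finLb by (simp add: card_cartesian_product card_lists_length_eq)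
    also have "\<dots> \<le> (2^(a*a))^p * (2^(b*b))^p" using cLa cLb by (simp add: mult_le_mono power_mono)
    also have "\<dots> = 2^(X*p)" unfolding X_def by (simp add: power_mult[symmetric] power_add add_mult_distrib)
    finally show ?thesis .
  qed
  define B0 where "B0 = 2^(m*n - p*p*(a*b)) * (c-1)^(p*p)"
  have mn: "p*p*(a*b) \<le> m*n"
  proof -
    have "a*b \<le> G*Gb" using aG bG by (rule mult_le_mono)
    then have "p*p*(a*b) \<le> p*p*(G*Gb)" by simp
    then show ?thesis unfolding m_def n_def by (simp add: algebra_simps)
  qed
  have "card (\<Union>F\<in>Fams. Bad F) \<le> (\<Sum>F\<in>Fams. card (Bad F))" by (rule card_UN_le[OF finFams])
  also have "\<dots> = card Fams * B0" using cardBad unfolding B0_def by simp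
  also have "\<dots> \<le> 2^(X*p) * B0" using cardFams by simp
  also have "\<dots> < card (Pow (M \<times> N))"
  proof -
    have k: "2^(X*p) * (c-1)^(p*p) < c^(p*p)" unfolding p_def by (rule key_ineq[OF c1])
    have "c^(p*p) = 2^(p*p*(a*b))" unfolding c_def by (simp add: power_mult[symmetric] mult.commute)
    have "2^(X*p) * B0 = 2^(m*n - p*p*(a*b)) * (2^(X*p) * (c-1)^(p*p))" unfolding B0_def by simp
    also have "\<dots> < 2^(m*n - p*p*(a*b)) * c^(p*p)" using k by simp
    also have "\<dots> = 2^(m*n)" using mn \<open>c^(p*p) = 2^(p*p*(a*b))\<close> by (simp add: power_add[symmetric])
    finally show ?thesis using finMN cardMN by (simp add: card_Pow)
  qed
  finally have lt: "card (\<Union>F\<in>Fams. Bad F) < card (Pow (M \<times> N))" .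
  have "\<not> Pow (M \<times> N) \<subseteq> (\<Union>F\<in>Fams. Bad F)"
  proof
    assume "Pow (M \<times> N) \<subseteq> (\<Union>F\<in>Fams. Bad F)"
    moreover have "finite (\<Union>F\<in>Fams. Bad F)" using finFams finMN unfolding Bad_def by auto
    ultimately show False using lt card_mono by (metis not_le)
  qed
  then obtain R where R: "R \<subseteq> M \<times> N" "\<forall>F\<in>Fams. R \<notin> Bad F" by auto
  define E where "E = R \<union> {(y,x). x \<in> M \<and> y \<in> N \<and> (x,y) \<notin> R}"
  have MN: "M \<inter> N = {}" unfolding M_def N_def by auto
  have bt: "bipartite_tournament M N E"
    unfolding bipartite_tournament_def E_def using R(1) MN unfolding M_def N_def by auto
  have main: "\<forall>T. completion M N E T \<longrightarrow>
     (\<exists>xs ys. distinct xs \<and> length xs = a \<and> set xs \<subseteq> M \<and> sorted_wrt (\<lambda>x y. (x,y)\<in>T) xs \<and>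
       distinct ys \<and> length ys = b \<and> set ys \<subseteq> N \<and> sorted_wrt (\<lambda>x y. (x,y)\<in>T) ys \<and>
       (\<forall>i<a. \<forall>k<b. (h i k \<longrightarrow> (xs!i, ys!k) \<in> T) \<and> (\<not> h i k \<longrightarrow> (ys!k, xs!i) \<in> T)))"
  proof (intro allI impI)
    fix T assume comp: "completion M N E T"
    have ET: "E \<subseteq> T" using comp unfolding completion_def bipartite_tournament_def using bt
      unfolding bipartite_tournament_def by blast
    have tot: "\<forall>u\<in>M \<union> N. \<forall>v\<in>M \<union> N. u \<noteq> v \<longrightarrow> (u,v)\<in>T \<or> (v,u)\<in>T"
      using comp unfolding completion_def tournament_def by blast
    have "\<forall>g. \<exists>xs. g < p \<longrightarrow> (distinct xs \<and> set xs \<subseteq> {g*G..<g*G+G} \<and> length xs = a \<and> sorted_wrt (\<lambda>x y. (x,y)\<in>T) xs)"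
    proof (intro allI)
      fix g show "\<exists>xs. g < p \<longrightarrow> (distinct xs \<and> set xs \<subseteq> {g*G..<g*G+G} \<and> length xs = a \<and> sorted_wrt (\<lambda>x y. (x,y)\<in>T) xs)"
      proof (cases "g < p")
        case True
        have "\<forall>u\<in>{g*G..<g*G+G}. \<forall>v\<in>{g*G..<g*G+G}. u \<noteq> v \<longrightarrow> (u,v)\<in>T \<or> (v,u)\<in>T"
          using tot grpM[OF True] by blast
        then show ?thesis using tourn_chain[of "{g*G..<g*G+G}" a T] unfolding G_def by auto
      qed auto
    qed
    then obtain cx where cx: "\<And>g. g < p \<Longrightarrow> distinct (cx g) \<and> set (cx g) \<subseteq> {g*G..<g*G+G} \<and> length (cx g) = a \<and> sorted_wrt (\<lambda>x y. (x,y)\<in>T) (cx g)"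
      by metis
    have "\<forall>j. \<exists>ys. j < p \<longrightarrow> (distinct ys \<and> set ys \<subseteq> {m + j*Gb..<m + j*Gb+Gb} \<and> length ys = b \<and> sorted_wrt (\<lambda>x y. (x,y)\<in>T) ys)"
    proof (intro allI)
      fix j show "\<exists>ys. j < p \<longrightarrow> (distinct ys \<and> set ys \<subseteq> {m + j*Gb..<m + j*Gb+Gb} \<and> length ys = b \<and> sorted_wrt (\<lambda>x y. (x,y)\<in>T) ys)"
      proof (cases "j < p")
        case True
        have "\<forall>u\<in>{m + j*Gb..<m + j*Gb+Gb}. \<forall>v\<in>{m + j*Gb..<m + j*Gb+Gb}. u \<noteq> v \<longrightarrow> (u,v)\<in>T \<or> (v,u)\<in>T"
          using tot grpN[OF True] by blast
        then show ?thesis using tourn_chain[of "{m + j*Gb..<m + j*Gb+Gb}" b T] unfolding Gb_def by auto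
      qed auto
    qed
    then obtain cy where cy: "\<And>j. j < p \<Longrightarrow> distinct (cy j) \<and> set (cy j) \<subseteq> {m + j*Gb..<m + j*Gb+Gb} \<and> length (cy j) = b \<and> sorted_wrt (\<lambda>x y. (x,y)\<in>T) (cy j)"
      by metis
    define XS where "XS = map (\<lambda>g. map (\<lambda>x. x - g*G) (cx g)) [0..<p]"
    define YS where "YS = map (\<lambda>j. map (\<lambda>y. y - (m + j*Gb)) (cy j)) [0..<p]"
    have XS: "set XS \<subseteq> La" "length XS = p"
    proof -
      show "length XS = p" unfolding XS_def by simp
      show "set XS \<subseteq> La"
      proof
        fix xs assume "xs \<in> set XS"
        then obtain g where g: "g < p" "xs = map (\<lambda>x. x - g*G) (cx g)" unfolding XS_def by auto
        have ge: "\<forall>x\<in>set (cx g). g*G \<le> x" using cx[OF g(1)] by auto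
        have "inj_on (\<lambda>x. x - g*G) (set (cx g))" unfolding inj_on_def
        proof (intro ballI impI)
          fix x y assume "x \<in> set (cx g)" "y \<in> set (cx g)" "x - g*G = y - g*G"
          then show "x = y" using ge by (metis le_add_diff_inverse)
        qed
        moreover have lt: "\<forall>x\<in>set (cx g). x - g*G < G"
        proof
          fix x assume "x \<in> set (cx g)"
          then have "g*G \<le> x" "x < g*G+G" using cx[OF g(1)] by auto
          then show "x - g*G < G" by linarith
        qed
        ultimately show "xs \<in> La" using cx[OF g(1)] g(2) unfolding La_def by (auto simp: distinct_map)
      qed
    qed
    have YS: "set YS \<subseteq> Lb" "length YS = p"
    proof -
      show "length YS = p" unfolding YS_def by simp
      show "set YS \<subseteq> Lb"
      proof
        fix ys assume "ys \<in> set YS"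
        then obtain j where j: "j < p" "ys = map (\<lambda>y. y - (m + j*Gb)) (cy j)" unfolding YS_def by auto
        have ge: "\<forall>x\<in>set (cy j). m + j*Gb \<le> x" using cy[OF j(1)] by auto
        have "inj_on (\<lambda>y. y - (m + j*Gb)) (set (cy j))" unfolding inj_on_def
        proof (intro ballI impI)
          fix x y assume "x \<in> set (cy j)" "y \<in> set (cy j)" "x - (m + j*Gb) = y - (m + j*Gb)"
          then show "x = y" using ge by (metis le_add_diff_inverse)
        qed
        moreover have lt: "\<forall>x\<in>set (cy j). x - (m + j*Gb) < Gb"
        proof
          fix x assume "x \<in> set (cy j)"
          then have "m + j*Gb \<le> x" "x < m + j*Gb+Gb" using cy[OF j(1)] by auto
          then show "x - (m + j*Gb) < Gb" by linarith
        qed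
        ultimately show "ys \<in> Lb" using cy[OF j(1)] j(2) unfolding Lb_def by (auto simp: distinct_map)
      qed
    qed
    have cMx: "cM XS g = cx g" if "g < p" for g
      unfolding cM_def XS_def using that cx[OF that] by (auto intro!: map_idI)
    have cNy: "cN YS j = cy j" if "j < p" for j
      unfolding cN_def YS_def using that cy[OF that] by (auto intro!: map_idI)
    have "(XS, YS) \<in> Fams" unfolding Fams_def using XS YS by auto
    then have "R \<notin> Bad (XS, YS)" using R(2) by blast
    then obtain i where i: "i \<in> I" "\<not> P (XS, YS) i (R \<inter> D (XS, YS) i)" unfolding Bad_def using R(1) by auto
    obtain g j where gj: "i = (g, j)" "g < p" "j < p" using i(1) unfolding I_def by auto
    have mt: "mtch h a b (R \<inter> (set (cx g) \<times> set (cy j))) (cx g) (cy j)"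
      using i(2) unfolding P_def D_def gj(1) using cMx[OF gj(2)] cNy[OF gj(3)] by simp
    show "\<exists>xs ys. distinct xs \<and> length xs = a \<and> set xs \<subseteq> M \<and> sorted_wrt (\<lambda>x y. (x,y)\<in>T) xs \<and>
       distinct ys \<and> length ys = b \<and> set ys \<subseteq> N \<and> sorted_wrt (\<lambda>x y. (x,y)\<in>T) ys \<and>
       (\<forall>i<a. \<forall>k<b. (h i k \<longrightarrow> (xs!i, ys!k) \<in> T) \<and> (\<not> h i k \<longrightarrow> (ys!k, xs!i) \<in> T))"
    proof (intro exI conjI allI impI)
      show "distinct (cx g)" "length (cx g) = a" "sorted_wrt (\<lambda>x y. (x,y)\<in>T) (cx g)" using cx[OF gj(2)] by auto
      show xsM: "set (cx g) \<subseteq> M" using cx[OF gj(2)] grpM[OF gj(2)] by auto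
      show "distinct (cy j)" "length (cy j) = b" "sorted_wrt (\<lambda>x y. (x,y)\<in>T) (cy j)" using cy[OF gj(3)] by auto
      show ysN: "set (cy j) \<subseteq> N" using cy[OF gj(3)] grpN[OF gj(3)] by auto
      fix i' k assume ik: "i' < a" "k < b"
      have inx: "cx g ! i' \<in> set (cx g)" using ik cx[OF gj(2)] by auto
      have iny: "cy j ! k \<in> set (cy j)" using ik cy[OF gj(3)] by auto
      have iff: "(cx g ! i', cy j ! k) \<in> R \<longleftrightarrow> h i' k" using mt ik inx iny unfolding mtch_def by auto
      { assume "h i' k"
        then show "(cx g ! i', cy j ! k) \<in> T" using iff ET unfolding E_def by auto }
      { assume "\<not> h i' k"
        then have "(cy j ! k, cx g ! i') \<in> E" using iff inx iny xsM ysN unfolding E_def by auto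
        then show "(cy j ! k, cx g ! i') \<in> T" using ET by auto }
    qed
  qed
  show ?thesis using bt main by blast
qed


theorem lemma3p4:
  fixes VH :: "'a set" and EH :: "('a \<times> 'a) set"
  assumes "oriented_graph VH EH" and "two_colorable VH EH"
  shows "\<exists>(M :: nat set) N E. bipartite_tournament M N E \<and> forces M N E VH EH"
proof -
  obtain A B where AB: "A \<union> B = VH" "A \<inter> B = {}" "acyclic (EH \<inter> (A \<times> A))" "acyclic (EH \<inter> (B \<times> B))"
    using assms(2) unfolding two_colorable_def by blast
  have finV: "finite VH" and EV: "EH \<subseteq> VH \<times> VH" and asym: "\<forall>u v. (u, v) \<in> EH \<longrightarrow> (v, u) \<notin> EH"
    using assms(1) unfolding oriented_graph_def by auto
  have finA: "finite A" and finB: "finite B" using finV AB(1) by auto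
  obtain rA where rA: "inj_on rA A" "rA ` A = {..<card A}" "\<forall>u\<in>A. \<forall>v\<in>A. (u,v) \<in> EH \<inter> (A \<times> A) \<longrightarrow> rA u < rA v"
    using lin_ext[OF finA AB(3)] by blast
  obtain rB where rB: "inj_on rB B" "rB ` B = {..<card B}" "\<forall>u\<in>B. \<forall>v\<in>B. (u,v) \<in> EH \<inter> (B \<times> B) \<longrightarrow> rB u < rB v"
    using lin_ext[OF finB AB(4)] by blast
  define h where "h = (\<lambda>i k. \<exists>u\<in>A. \<exists>w\<in>B. rA u = i \<and> rB w = k \<and> (u,w)\<in>EH)"
  obtain M :: "nat set" and N E where bt: "bipartite_tournament M N E" and F: "\<forall>T. completion M N E T \<longrightarrow>
     (\<exists>xs ys. distinct xs \<and> length xs = card A \<and> set xs \<subseteq> M \<and> sorted_wrt (\<lambda>x y. (x,y)\<in>T) xs \<and>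
       distinct ys \<and> length ys = card B \<and> set ys \<subseteq> N \<and> sorted_wrt (\<lambda>x y. (x,y)\<in>T) ys \<and>
       (\<forall>i<card A. \<forall>k<card B. (h i k \<longrightarrow> (xs!i, ys!k) \<in> T) \<and> (\<not> h i k \<longrightarrow> (ys!k, xs!i) \<in> T)))"
    using CL[of "card A" "card B" h] by blast
  have MN: "M \<inter> N = {}" using bt unfolding bipartite_tournament_def by blast
  have rAlt: "rA u < card A" if "u \<in> A" for u using rA(2) that by blast
  have rBlt: "rB u < card B" if "u \<in> B" for u using rB(2) that by blast
  have "forces M N E VH EH" unfolding forces_def
  proof (intro allI impI)
    fix T assume "completion M N E T"
    from F[rule_format, OF this] obtain xs ys where xy: "distinct xs" "length xs = card A" "set xs \<subseteq> M"
      "sorted_wrt (\<lambda>x y. (x,y)\<in>T) xs" "distinct ys" "length ys = card B" "set ys \<subseteq> N"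
      "sorted_wrt (\<lambda>x y. (x,y)\<in>T) ys"
      "\<forall>i<card A. \<forall>k<card B. (h i k \<longrightarrow> (xs!i, ys!k) \<in> T) \<and> (\<not> h i k \<longrightarrow> (ys!k, xs!i) \<in> T)"
      by blast
    define f where "f = (\<lambda>v. if v \<in> A then xs ! rA v else ys ! rB v)"
    have fA: "f u \<in> M" if "u \<in> A" for u
      using that rAlt[OF that] xy(2,3) unfolding f_def by auto
    have fB: "f u \<in> N" if "u \<in> B" for u
    proof -
      have "u \<notin> A" using that AB(2) by blast
      then show ?thesis using that rBlt[OF that] xy(6,7) unfolding f_def by auto
    qed
    show "contains_copy (M \<union> N) T VH EH" unfolding contains_copy_def
    proof (intro exI[of _ f] conjI)
      show "inj_on f VH" unfolding inj_on_def
      proof (intro ballI impI)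
        fix u v assume uv: "u \<in> VH" "v \<in> VH" "f u = f v"
        show "u = v"
        proof (cases "u \<in> A")
          case uA: True
          show ?thesis
          proof (cases "v \<in> A")
            case True
            then have "xs ! rA u = xs ! rA v" using uA uv(3) unfolding f_def by simp
            then have "rA u = rA v" using nth_eq_iff_index_eq xy(1,2) rAlt uA True by metis
            then show ?thesis using rA(1) uA True unfolding inj_on_def by blast
          next
            case False
            then have "v \<in> B" using uv(2) AB(1) by blast
            then show ?thesis using fA[OF uA] fB uv(3) MN by auto
          qed
        next
          case uA: False
          then have uB: "u \<in> B" using uv(1) AB(1) by blast
          show ?thesis
          proof (cases "v \<in> A")
            case True
            then show ?thesis using fA[OF True] fB[OF uB] uv(3) MN by auto
          next
            case False
            then have vB: "v \<in> B" using uv(2) AB(1) by blast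
            then have "ys ! rB u = ys ! rB v" using uA False uv(3) unfolding f_def by simp
            then have "rB u = rB v" using nth_eq_iff_index_eq xy(5,6) rBlt uB vB by metis
            then show ?thesis using rB(1) uB vB unfolding inj_on_def by blast
          qed
        qed
      qed
      show "f ` VH \<subseteq> M \<union> N" using fA fB AB(1) by blast
      show "\<forall>(u, v)\<in>EH. (f u, f v) \<in> T"
      proof (clarify)
        fix u v assume e: "(u, v) \<in> EH"
        then have uv: "u \<in> VH" "v \<in> VH" using EV by auto
        show "(f u, f v) \<in> T"
        proof (cases "u \<in> A")
          case uA: True
          show ?thesis
          proof (cases "v \<in> A")
            case vA: True
            have "rA u < rA v" using rA(3) uA vA e by blast
            then show ?thesis using xy(2,4) rAlt[OF vA] uA vA unfolding f_def sorted_wrt_iff_nth_less by auto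
          next
            case vA: False
            then have vB: "v \<in> B" using uv(2) AB(1) by blast
            have "h (rA u) (rB v)" unfolding h_def using uA vB e by blast
            then show ?thesis using xy(9) rAlt[OF uA] rBlt[OF vB] uA vA unfolding f_def by auto
          qed
        next
          case uA: False
          then have uB: "u \<in> B" using uv(1) AB(1) by blast
          show ?thesis
          proof (cases "v \<in> A")
            case vA: True
            have "\<not> h (rA v) (rB u)"
            proof
              assume "h (rA v) (rB u)"
              then obtain u' w' where "u' \<in> A" "w' \<in> B" "rA u' = rA v" "rB w' = rB u" "(u', w') \<in> EH"
                unfolding h_def by blast
              then have "(v, u) \<in> EH" using rA(1) rB(1) vA uB unfolding inj_on_def by metis
              then show False using asym e by blast
            qed
            then show ?thesis using xy(9) rAlt[OF vA] rBlt[OF uB] uA vA unfolding f_def by auto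
          next
            case vA: False
            then have vB: "v \<in> B" using uv(2) AB(1) by blast
            have "rB u < rB v" using rB(3) uB vB e by blast
            then show ?thesis using xy(6,8) rBlt[OF vB] uA vA unfolding f_def sorted_wrt_iff_nth_less by auto
          qed
        qed
      qed
    qed
  qed
  then show ?thesis using bt by blast
qed

end
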